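(* Let $P$ be an Eulerian poset of rank $d\ge 3$ with $f$-vector $(f_{-1},\dots,f_d)$. Then $\mathcal{M}_P(z)=\sum_{-1\le i\le j\le d}N_{i,j}(-z)^{j-i}$, and all $N_{i,j}$ are determined by the $f$-vector together with the values $N_{i,j}$ for $0\le i$, $i+2\le j\le d-2$, as follows: $N_{r,r}=N_{-1,r}=N_{r,d}=f_r$ for $-1\le r\le d$; $N_{0,1}=2f_1$; for $1\le i\le d-3$, $$N_{i,i+1}=\bigl((-1)^i+1\bigr)f_{i+1}+\sum_{k=0}^{i-1}(-1)^{i+1-k}N_{k,i+1};$$ $N_{d-2,d-1}=2f_{d-2}$; and for $0\le i\le d-3$, $$N_{i,d-1}=\bigl((-1)^{d-i}+1\bigr)f_i+\sum_{j=i+1}^{d-2}(-1)^{d-j}N_{i,j}.$$ In particular, $\mathcal{M}_P(z)$ is determined by the $f$-vector and the numbers $N_{i,j}$ with $0<i+1<j<d-1$.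
   Context: A ranked poset is a finite poset with a rank function $|\cdot|$ such that covering relations increase rank by one and minimal elements have rank $-1$; $f_r$ is the number of elements of rank $r$. The Möbius function is $\mu[p,p]=1$, $\mu[p,q]=-\sum_{p\le s<q}\mu[p,s]$ for $p<q$, $0$ if $p\not\le q$. An Eulerian poset is a ranked poset with unique minimum and maximum elements such that $\mu[p,q]=(-1)^{|q|-|p|}$ for all $p\le q$. For $-1\le i\le j\le d$, $N_{i,j}$ is the number of pairs $(p,q)$ with $p\le q$, $|p|=i$, $|q|=j$. The Möbius polynomial is $\mathcal{M}_P(z)=\sum_{p\le q\in P}\mu[p,q]z^{|q|-|p|}$. *)

theory Defs
  imports "HOL-Computational_Algebra.Polynomial"
begin

definition poset_on :: "'a set \<Rightarrow> ('a \<Rightarrow> 'a \<Rightarrow> bool) \<Rightarrow> bool" where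
  "poset_on P le \<longleftrightarrow> finite P \<and> (\<forall>p\<in>P. le p p)
     \<and> (\<forall>p\<in>P. \<forall>q\<in>P. le p q \<and> le q p \<longrightarrow> p = q)
     \<and> (\<forall>p\<in>P. \<forall>q\<in>P. \<forall>s\<in>P. le p q \<and> le q s \<longrightarrow> le p s)"

definition covers :: "'a set \<Rightarrow> ('a \<Rightarrow> 'a \<Rightarrow> bool) \<Rightarrow> 'a \<Rightarrow> 'a \<Rightarrow> bool" where
  "covers P le p q \<longleftrightarrow> le p q \<and> p \<noteq> q \<and> \<not> (\<exists>s\<in>P. le p s \<and> le s q \<and> s \<noteq> p \<and> s \<noteq> q)"

definition ranked_poset :: "'a set \<Rightarrow> ('a \<Rightarrow> 'a \<Rightarrow> bool) \<Rightarrow> ('a \<Rightarrow> int) \<Rightarrow> bool" where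
  "ranked_poset P le rk \<longleftrightarrow> poset_on P le
     \<and> (\<forall>p\<in>P. \<forall>q\<in>P. covers P le p q \<longrightarrow> rk q = rk p + 1)
     \<and> (\<forall>p\<in>P. (\<forall>q\<in>P. le q p \<longrightarrow> q = p) \<longrightarrow> rk p = -1)"

definition mobius :: "'a set \<Rightarrow> ('a \<Rightarrow> 'a \<Rightarrow> bool) \<Rightarrow> 'a \<Rightarrow> 'a \<Rightarrow> int" where
  "mobius P le = (THE m. (\<forall>p q. (p \<notin> P \<or> q \<notin> P) \<longrightarrow> m p q = 0) \<and>
      (\<forall>p\<in>P. \<forall>q\<in>P. m p q =
         (if p = q then 1
          else if le p q then - (\<Sum>s\<in>{s\<in>P. le p s \<and> le s q \<and> s \<noteq> q}. m p s)
          else 0)))"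

definition eulerian :: "'a set \<Rightarrow> ('a \<Rightarrow> 'a \<Rightarrow> bool) \<Rightarrow> ('a \<Rightarrow> int) \<Rightarrow> bool" where
  "eulerian P le rk \<longleftrightarrow> ranked_poset P le rk
     \<and> (\<exists>b\<in>P. \<forall>p\<in>P. le b p) \<and> (\<exists>t\<in>P. \<forall>p\<in>P. le p t)
     \<and> (\<forall>p\<in>P. \<forall>q\<in>P. le p q \<longrightarrow> mobius P le p q = (-1) ^ nat (rk q - rk p))"

definition fvec :: "'a set \<Rightarrow> ('a \<Rightarrow> int) \<Rightarrow> int \<Rightarrow> nat" where
  "fvec P rk r = card {p\<in>P. rk p = r}"

definition Npairs :: "'a set \<Rightarrow> ('a \<Rightarrow> 'a \<Rightarrow> bool) \<Rightarrow> ('a \<Rightarrow> int) \<Rightarrow> int \<Rightarrow> int \<Rightarrow> nat" where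
  "Npairs P le rk i j = card {(p, q). p \<in> P \<and> q \<in> P \<and> le p q \<and> rk p = i \<and> rk q = j}"

definition mobius_poly :: "'a set \<Rightarrow> ('a \<Rightarrow> 'a \<Rightarrow> bool) \<Rightarrow> ('a \<Rightarrow> int) \<Rightarrow> int poly" where
  "mobius_poly P le rk =
     (\<Sum>(p, q)\<in>{(p, q). p \<in> P \<and> q \<in> P \<and> le p q}. monom (mobius P le p q) (nat (rk q - rk p)))"

end

theory Submission
  imports Defs
begin


definition sg :: "int \<Rightarrow> int" where "sg k = (if even k then 1 else -1)"
lemma sg_add: "sg (a+b) = sg a * sg b" by (auto simp: sg_def)
lemma sg_diff: "sg (a-b) = sg a * sg b" by (auto simp: sg_def)
lemma sg_pow: "0 \<le> k \<Longrightarrow> (-1::int)^nat k = sg k"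
  by (simp add: sg_def minus_one_power_iff even_nat_iff)
lemma sg_sq: "sg a * sg a = 1" by (simp add: sg_def)
lemma sg0: "sg 0 = 1" and sg1: "sg 1 = -1" and sg2: "sg 2 = 1" by (simp_all add: sg_def)

lemma itv_lt_gen:
  assumes po: "poset_on P le" and "p \<in> P" "q\<in>P" "s\<in>P" "le p s" "le s q" "s \<noteq> q"
  shows "card {t\<in>P. le p t \<and> le t s} < card {t\<in>P. le p t \<and> le t q}"
proof (rule psubset_card_mono)
  show "finite {t\<in>P. le p t \<and> le t q}" using po by (simp add: poset_on_def)
  have "{t\<in>P. le p t \<and> le t s} \<subseteq> {t\<in>P. le p t \<and> le t q}"
    using po assms unfolding poset_on_def by blast
  moreover have "q \<in> {t\<in>P. le p t \<and> le t q}" using po assms unfolding poset_on_def by blast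
  moreover have "q \<notin> {t\<in>P. le p t \<and> le t s}" using po assms unfolding poset_on_def by blast
  ultimately show "{t\<in>P. le p t \<and> le t s} \<subset> {t\<in>P. le p t \<and> le t q}" by blast
qed

function mob :: "'a set \<Rightarrow> ('a \<Rightarrow> 'a \<Rightarrow> bool) \<Rightarrow> 'a \<Rightarrow> 'a \<Rightarrow> int" where
  "mob P le p q = (if p \<notin> P \<or> q \<notin> P then 0 else if p = q then 1
      else if le p q \<and> poset_on P le then - (\<Sum>s\<in>{s\<in>P. le p s \<and> le s q \<and> s \<noteq> q}. mob P le p s) else 0)"
  by pat_completeness auto
termination
  by (relation "measure (\<lambda>(P,le,p,q). card {s\<in>P. le p s \<and> le s q})") (auto intro: itv_lt_gen)

declare mob.simps [simp del]

lemma mob_unique: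
  assumes po: "poset_on P le" and m0: "\<forall>p q. (p\<notin>P \<or> q\<notin>P) \<longrightarrow> m p q = 0"
   and mr: "\<forall>p\<in>P. \<forall>q\<in>P. m p q = (if p=q then 1 else if le p q then -(\<Sum>s\<in>{s\<in>P. le p s \<and> le s q \<and> s \<noteq> q}. m p s) else 0)"
  shows "m p q = mob P le p q"
proof -
  have "\<forall>q. card {s\<in>P. le p s \<and> le s q} = n \<longrightarrow> m p q = mob P le p q" for n
  proof (induction n rule: less_induct)
    case (less n)
    show ?case
    proof (intro allI impI)
      fix q assume cq: "card {s\<in>P. le p s \<and> le s q} = n"
      show "m p q = mob P le p q"
      proof (cases "p\<in>P \<and> q\<in>P")
        case False thus ?thesis using m0 by (subst mob.simps) auto
      next
        case True
        show ?thesis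
        proof (cases "p \<noteq> q \<and> le p q")
          case True2: True
          have "\<forall>s\<in>{s\<in>P. le p s \<and> le s q \<and> s\<noteq>q}. m p s = mob P le p s"
          proof
            fix s assume s: "s \<in> {s\<in>P. le p s \<and> le s q \<and> s \<noteq> q}"
            have "card {t\<in>P. le p t \<and> le t s} < n" using itv_lt_gen[OF po] True s cq by auto
            then show "m p s = mob P le p s" using less.IH[of "card {t\<in>P. le p t \<and> le t s}"] by blast
          qed
          then have "(\<Sum>s\<in>{s\<in>P. le p s \<and> le s q \<and> s \<noteq> q}. m p s) = (\<Sum>s\<in>{s\<in>P. le p s \<and> le s q \<and> s \<noteq> q}. mob P le p s)"
            by (intro sum.cong) auto
          then show ?thesis using mr[rule_format, of p q] True True2 po by (subst mob.simps) auto
        next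
          case False thus ?thesis using mr[rule_format, of p q] True po by (subst mob.simps) auto
        qed
      qed
    qed
  qed
  thus ?thesis by blast
qed

lemma mobius_mob:
  assumes po: "poset_on P le"
  shows "mobius P le = mob P le"
  unfolding mobius_def
proof (rule the_equality)
  show "(\<forall>p q. (p \<notin> P \<or> q \<notin> P) \<longrightarrow> mob P le p q = 0) \<and>
      (\<forall>p\<in>P. \<forall>q\<in>P. mob P le p q =
         (if p = q then 1
          else if le p q then - (\<Sum>s\<in>{s\<in>P. le p s \<and> le s q \<and> s \<noteq> q}. mob P le p s)
          else 0))"
    using po by (intro conjI allI ballI impI; subst mob.simps; simp)
  fix m :: "'a \<Rightarrow> 'a \<Rightarrow> int" assume "(\<forall>p q. (p \<notin> P \<or> q \<notin> P) \<longrightarrow> m p q = 0) \<and>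
      (\<forall>p\<in>P. \<forall>q\<in>P. m p q =
         (if p = q then 1
          else if le p q then - (\<Sum>s\<in>{s\<in>P. le p s \<and> le s q \<and> s \<noteq> q}. m p s)
          else 0))"
  then show "m = mob P le" using mob_unique[OF po] by blast
qed

lemma mobius_rec:
  assumes po: "poset_on P le" and "p\<in>P" "q\<in>P" "le p q" "p \<noteq> q"
  shows "mobius P le p q = - (\<Sum>s\<in>{s\<in>P. le p s \<and> le s q \<and> s \<noteq> q}. mobius P le p s)"
  using assms by (simp add: mobius_mob[OF po]) (subst mob.simps, simp)




locale eul =
  fixes P :: "'a set" and le :: "'a \<Rightarrow> 'a \<Rightarrow> bool" and rk :: "'a \<Rightarrow> int" and d :: int
  assumes eul: "eulerian P le rk" and dP: "d \<in> rk ` P" and dmax: "\<forall>p\<in>P. rk p \<le> d"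
begin

lemma po: "poset_on P le" using eul by (simp add: eulerian_def ranked_poset_def)
lemma fin: "finite P" using po by (simp add: poset_on_def)
lemma rfl: "p \<in> P \<Longrightarrow> le p p" using po by (simp add: poset_on_def)
lemma antisym: "p\<in>P \<Longrightarrow> q\<in>P \<Longrightarrow> le p q \<Longrightarrow> le q p \<Longrightarrow> p = q" using po unfolding poset_on_def by blast
lemma trns: "p\<in>P \<Longrightarrow> q\<in>P \<Longrightarrow> s\<in>P \<Longrightarrow> le p q \<Longrightarrow> le q s \<Longrightarrow> le p s" using po unfolding poset_on_def by blast
lemma cov: "p\<in>P \<Longrightarrow> q\<in>P \<Longrightarrow> covers P le p q \<Longrightarrow> rk q = rk p + 1" using eul by (simp add: eulerian_def ranked_poset_def)
lemma minr: "p\<in>P \<Longrightarrow> (\<forall>q\<in>P. le q p \<longrightarrow> q = p) \<Longrightarrow> rk p = -1" using eul unfolding eulerian_def ranked_poset_def by blast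
lemma mu: "p\<in>P \<Longrightarrow> q\<in>P \<Longrightarrow> le p q \<Longrightarrow> mobius P le p q = (-1)^nat(rk q - rk p)" using eul by (simp add: eulerian_def)

definition bt where "bt = (SOME b. b\<in>P \<and> (\<forall>p\<in>P. le b p))"
definition tp where "tp = (SOME b. b\<in>P \<and> (\<forall>p\<in>P. le p b))"

lemma bt: "bt \<in> P \<and> (\<forall>p\<in>P. le bt p)"
proof -
  have "\<exists>b. b\<in>P \<and> (\<forall>p\<in>P. le b p)" using eul by (auto simp: eulerian_def)
  then show ?thesis unfolding bt_def by (rule someI_ex)
qed
lemma tp: "tp \<in> P \<and> (\<forall>p\<in>P. le p tp)"
proof -
  have "\<exists>b. b\<in>P \<and> (\<forall>p\<in>P. le p b)" using eul by (auto simp: eulerian_def)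
  then show ?thesis unfolding tp_def by (rule someI_ex)
qed

definition itv where "itv p q = {s\<in>P. le p s \<and> le s q}"

lemma itv_fin: "finite (itv p q)" using fin by (simp add: itv_def)

lemma itv_lt1: "p\<in>P \<Longrightarrow> q\<in>P \<Longrightarrow> s\<in>P \<Longrightarrow> le p s \<Longrightarrow> le s q \<Longrightarrow> s \<noteq> q \<Longrightarrow> card (itv p s) < card (itv p q)"
  unfolding itv_def by (rule itv_lt_gen[OF po])

lemma itv_lt2:
  assumes "p\<in>P" "q\<in>P" "s\<in>P" "le p s" "le s q" "s \<noteq> p"
  shows "card (itv s q) < card (itv p q)"
proof (rule psubset_card_mono[OF itv_fin])
  have "itv s q \<subseteq> itv p q" using assms trns unfolding itv_def by blast
  moreover have "p \<in> itv p q" using assms trns rfl unfolding itv_def by blast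
  moreover have "p \<notin> itv s q" using assms antisym unfolding itv_def by blast
  ultimately show "itv s q \<subset> itv p q" by blast
qed

lemma rk_lt: "p\<in>P \<Longrightarrow> q\<in>P \<Longrightarrow> le p q \<Longrightarrow> p \<noteq> q \<Longrightarrow> rk p < rk q"
proof -
  have "\<forall>p q. card (itv p q) = n \<longrightarrow> p\<in>P \<longrightarrow> q\<in>P \<longrightarrow> le p q \<longrightarrow> p\<noteq>q \<longrightarrow> rk p < rk q" for n
  proof (induction n rule: less_induct)
    case (less n)
    show ?case
    proof (intro allI impI)
      fix p q assume n: "card (itv p q) = n" and p: "p\<in>P" "q\<in>P" "le p q" "p\<noteq>q"
      show "rk p < rk q"
      proof (cases "covers P le p q")
        case True then show ?thesis using cov p by simp
      next
        case False
        then obtain s where s: "s\<in>P" "le p s" "le s q" "s\<noteq>p" "s\<noteq>q" using p unfolding covers_def by blast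
        have "card (itv p s) < n" using itv_lt1[of p q s] p s n by simp
        then have 1: "rk p < rk s" using less.IH[of "card (itv p s)"] p s by blast
        have "card (itv s q) < n" using itv_lt2[of p q s] p s n by simp
        then have 2: "rk s < rk q" using less.IH[of "card (itv s q)"] p s by blast
        show ?thesis using 1 2 by simp
      qed
    qed
  qed
  then show "p\<in>P \<Longrightarrow> q\<in>P \<Longrightarrow> le p q \<Longrightarrow> p \<noteq> q \<Longrightarrow> rk p < rk q" by blast
qed

lemma rk_le: "p\<in>P \<Longrightarrow> q\<in>P \<Longrightarrow> le p q \<Longrightarrow> rk p \<le> rk q"
  using rk_lt by (cases "p = q") force+

lemma rk_bt: "rk bt = -1"
  using bt antisym by (intro minr) auto

lemma rk_ge: "p \<in> P \<Longrightarrow> -1 \<le> rk p"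
  using rk_le[of bt p] bt rk_bt by auto

lemma rk_tp: "rk tp = d"
proof -
  obtain p0 where "p0\<in>P" "rk p0 = d" using dP by auto
  then show ?thesis using rk_le[of p0 tp] tp dmax by force
qed

lemma rk_le_d: "p\<in>P \<Longrightarrow> rk p \<le> d" using dmax by auto

lemma uniq_d: "p\<in>P \<Longrightarrow> rk p = d \<Longrightarrow> p = tp"
  using rk_lt[of p tp] tp rk_tp by force
lemma uniq_m1: "p\<in>P \<Longrightarrow> rk p = -1 \<Longrightarrow> p = bt"
  using rk_lt[of bt p] bt rk_bt by force
lemma same_rk: "p\<in>P \<Longrightarrow> q\<in>P \<Longrightarrow> le p q \<Longrightarrow> rk p = rk q \<Longrightarrow> p = q"
  using rk_lt by force

lemma euler:
  assumes "p\<in>P" "q\<in>P" "le p q" "p \<noteq> q"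
  shows "(\<Sum>s\<in>itv p q. sg (rk s - rk p)) = 0"
proof -
  have e: "{s\<in>P. le p s \<and> le s q \<and> s \<noteq> q} = itv p q - {q}" by (auto simp: itv_def)
  have "mobius P le p q = - (\<Sum>s\<in>itv p q - {q}. mobius P le p s)"
    using mobius_rec[OF po assms] e by simp
  also have "(\<Sum>s\<in>itv p q - {q}. mobius P le p s) = (\<Sum>s\<in>itv p q - {q}. sg (rk s - rk p))"
    by (intro sum.cong) (auto simp: itv_def mu assms sg_pow rk_le)
  finally have 1: "sg (rk q - rk p) = - (\<Sum>s\<in>itv p q - {q}. sg (rk s - rk p))"
    using mu[OF assms(1-3)] sg_pow rk_le[OF assms(1-3)] by simp
  have "q \<in> itv p q" using assms rfl by (simp add: itv_def)
  then have "(\<Sum>s\<in>itv p q. sg (rk s - rk p)) = sg (rk q - rk p) + (\<Sum>s\<in>itv p q - {q}. sg (rk s - rk p))"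
    using itv_fin sum.remove by metis
  then show ?thesis using 1 by simp
qed

lemma euler_dual:
  assumes "p\<in>P" "q\<in>P" "le p q" "p \<noteq> q"
  shows "(\<Sum>s\<in>itv p q. sg (rk q - rk s)) = 0"
proof -
  have "(\<Sum>s\<in>itv p q. sg (rk q - rk s)) = (\<Sum>s\<in>itv p q. sg (rk q - rk p) * sg (rk s - rk p))"
  proof (intro sum.cong refl)
    fix s assume "s \<in> itv p q"
    have "rk q - rk s = (rk q - rk p) - (rk s - rk p)" by simp
    then show "sg (rk q - rk s) = sg (rk q - rk p) * sg (rk s - rk p)" by (metis sg_diff)
  qed
  also have "\<dots> = 0" using euler[OF assms] by (simp add: sum_distrib_left[symmetric])
  finally show ?thesis .
qed

abbreviation "Pr i j \<equiv> {(p, q). p \<in> P \<and> q \<in> P \<and> le p q \<and> rk p = i \<and> rk q = j}"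

lemma Pr_fin: "finite (Pr i j)"
  by (rule finite_subset[of _ "P \<times> P"]) (auto simp: fin)

end


context eul begin

lemma count_up:
  assumes m: "0 \<le> m"
  shows "(\<Sum>k\<in>{-1..m}. sg (k+1) * int (Npairs P le rk k m)) = 0"
proof -
  define A where "A = {(s,q). s\<in>P \<and> q\<in>P \<and> le s q \<and> rk q = m}"
  have fA: "finite A" unfolding A_def by (rule finite_subset[of _ "P \<times> P"]) (auto simp: fin)
  have "(\<Sum>x\<in>A. sg (rk (fst x) + 1)) = (\<Sum>k\<in>{-1..m}. \<Sum>x\<in>{x\<in>A. rk (fst x) = k}. sg (rk (fst x) + 1))"
    by (rule sum.group[symmetric, OF fA]) (auto simp: A_def rk_ge rk_le)
  also have "\<dots> = (\<Sum>k\<in>{-1..m}. sg (k+1) * int (Npairs P le rk k m))"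
  proof (intro sum.cong refl)
    fix k
    have "{x\<in>A. rk (fst x) = k} = Pr k m" by (auto simp: A_def)
    moreover have "(\<Sum>x\<in>Pr k m. sg (rk (fst x) + 1)) = (\<Sum>x\<in>Pr k m. sg (k+1))" by (rule sum.cong) auto
    ultimately show "(\<Sum>x\<in>{x\<in>A. rk (fst x) = k}. sg (rk (fst x) + 1)) = sg (k+1) * int (Npairs P le rk k m)"
      by (simp add: Npairs_def mult.commute)
  qed
  finally have 1: "(\<Sum>x\<in>A. sg (rk (fst x) + 1)) = (\<Sum>k\<in>{-1..m}. sg (k+1) * int (Npairs P le rk k m))" .
  have "(\<Sum>x\<in>A. sg (rk (fst x) + 1)) = (\<Sum>q\<in>{q\<in>P. rk q = m}. \<Sum>x\<in>{x\<in>A. snd x = q}. sg (rk (fst x) + 1))"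
    by (rule sum.group[symmetric, OF fA]) (auto simp: A_def fin)
  also have "\<dots> = 0"
  proof (rule sum.neutral, rule ballI)
    fix q assume q: "q \<in> {q\<in>P. rk q = m}"
    have "{x\<in>A. snd x = q} = (\<lambda>s. (s,q)) ` itv bt q"
    proof (intro equalityI subsetI)
      fix x assume "x \<in> {x\<in>A. snd x = q}"
      then obtain s where "x = (s,q)" "s \<in> P" "le s q" unfolding A_def by auto
      then show "x \<in> (\<lambda>s. (s,q)) ` itv bt q" using bt unfolding itv_def by blast
    next
      fix x assume "x \<in> (\<lambda>s. (s,q)) ` itv bt q"
      then obtain s where "x = (s,q)" "s \<in> P" "le s q" unfolding itv_def by blast
      then show "x \<in> {x\<in>A. snd x = q}" using q unfolding A_def by simp
    qed
    then have "(\<Sum>x\<in>{x\<in>A. snd x = q}. sg (rk (fst x) + 1)) = (\<Sum>s\<in>itv bt q. sg (rk s + 1))"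
      by (simp add: sum.reindex inj_on_def)
    also have "\<dots> = (\<Sum>s\<in>itv bt q. sg (rk s - rk bt))" by (simp add: rk_bt)
    also have "\<dots> = 0"
    proof -
      have "bt \<noteq> q" using q m rk_bt by auto
      then show ?thesis using euler[of bt q] bt q by auto
    qed
    finally show "(\<Sum>x\<in>{x\<in>A. snd x = q}. sg (rk (fst x) + 1)) = 0" .
  qed
  finally show ?thesis using 1 by simp
qed

lemma count_down:
  assumes i: "i \<le> d - 1"
  shows "(\<Sum>k\<in>{i..d}. sg (d-k) * int (Npairs P le rk i k)) = 0"
proof -
  define A where "A = {(p,s). p\<in>P \<and> s\<in>P \<and> le p s \<and> rk p = i}"
  have fA: "finite A" unfolding A_def by (rule finite_subset[of _ "P \<times> P"]) (auto simp: fin)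
  have "(\<Sum>x\<in>A. sg (d - rk (snd x))) = (\<Sum>k\<in>{i..d}. \<Sum>x\<in>{x\<in>A. rk (snd x) = k}. sg (d - rk (snd x)))"
    by (rule sum.group[symmetric, OF fA]) (auto simp: A_def rk_le_d rk_le)
  also have "\<dots> = (\<Sum>k\<in>{i..d}. sg (d-k) * int (Npairs P le rk i k))"
  proof (intro sum.cong refl)
    fix k
    have "{x\<in>A. rk (snd x) = k} = Pr i k" by (auto simp: A_def)
    moreover have "(\<Sum>x\<in>Pr i k. sg (d - rk (snd x))) = (\<Sum>x\<in>Pr i k. sg (d-k))" by (rule sum.cong) auto
    ultimately show "(\<Sum>x\<in>{x\<in>A. rk (snd x) = k}. sg (d - rk (snd x))) = sg (d-k) * int (Npairs P le rk i k)"
      by (simp add: Npairs_def mult.commute)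
  qed
  finally have 1: "(\<Sum>x\<in>A. sg (d - rk (snd x))) = (\<Sum>k\<in>{i..d}. sg (d-k) * int (Npairs P le rk i k))" .
  have "(\<Sum>x\<in>A. sg (d - rk (snd x))) = (\<Sum>p\<in>{p\<in>P. rk p = i}. \<Sum>x\<in>{x\<in>A. fst x = p}. sg (d - rk (snd x)))"
    by (rule sum.group[symmetric, OF fA]) (auto simp: A_def fin)
  also have "\<dots> = 0"
  proof (rule sum.neutral, rule ballI)
    fix p assume p: "p \<in> {p\<in>P. rk p = i}"
    have "{x\<in>A. fst x = p} = (\<lambda>s. (p,s)) ` itv p tp"
    proof (intro equalityI subsetI)
      fix x assume "x \<in> {x\<in>A. fst x = p}"
      then obtain s where "x = (p,s)" "s \<in> P" "le p s" unfolding A_def by auto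
      then show "x \<in> (\<lambda>s. (p,s)) ` itv p tp" using tp unfolding itv_def by blast
    next
      fix x assume "x \<in> (\<lambda>s. (p,s)) ` itv p tp"
      then obtain s where "x = (p,s)" "s \<in> P" "le p s" unfolding itv_def by blast
      then show "x \<in> {x\<in>A. fst x = p}" using p unfolding A_def by simp
    qed
    then have "(\<Sum>x\<in>{x\<in>A. fst x = p}. sg (d - rk (snd x))) = (\<Sum>s\<in>itv p tp. sg (d - rk s))"
      by (simp add: sum.reindex inj_on_def)
    also have "\<dots> = (\<Sum>s\<in>itv p tp. sg (rk tp - rk s))" by (simp add: rk_tp)
    also have "\<dots> = 0"
    proof -
      have "p \<noteq> tp" using p i rk_tp by auto
      then show ?thesis using euler_dual[of p tp] tp p by auto
    qed
    finally show "(\<Sum>x\<in>{x\<in>A. fst x = p}. sg (d - rk (snd x))) = 0" .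
  qed
  finally show ?thesis using 1 by simp
qed

lemma N_diag: "Npairs P le rk r r = fvec P rk r"
proof -
  have "Pr r r = (\<lambda>p. (p,p)) ` {p\<in>P. rk p = r}"
  proof (intro equalityI subsetI)
    fix x assume "x \<in> Pr r r"
    then obtain a b where x: "x = (a,b)" "a\<in>P" "b\<in>P" "le a b" "rk a = r" "rk b = r" by auto
    then have "a = b" using same_rk[of a b] by simp
    then show "x \<in> (\<lambda>p. (p,p)) ` {p\<in>P. rk p = r}" using x by auto
    next
    fix x assume "x \<in> (\<lambda>p. (p,p)) ` {p\<in>P. rk p = r}"
    then obtain a where "x = (a,a)" "a \<in> P" "rk a = r" by blast
    then show "x \<in> Pr r r" using rfl by blast
  qed
  then show ?thesis by (simp add: Npairs_def fvec_def card_image inj_on_def)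
qed

lemma N_bot: "Npairs P le rk (-1) r = fvec P rk r"
proof -
  have "Pr (-1) r = (\<lambda>q. (bt,q)) ` {q\<in>P. rk q = r}" using uniq_m1 bt rk_bt by auto
  then show ?thesis by (simp add: Npairs_def fvec_def card_image inj_on_def)
qed

lemma N_top: "Npairs P le rk r d = fvec P rk r"
proof -
  have "Pr r d = (\<lambda>p. (p,tp)) ` {p\<in>P. rk p = r}" using uniq_d tp rk_tp by auto
  then show ?thesis by (simp add: Npairs_def fvec_def card_image inj_on_def)
qed

end


context eul begin

lemma adj:
  assumes i0: "0 \<le> i"
  shows "int (Npairs P le rk i (i+1)) = ((-1) ^ nat i + 1) * int (fvec P rk (i+1))
           + (\<Sum>k\<in>{0..i-1}. (-1) ^ nat (i + 1 - k) * int (Npairs P le rk k (i+1)))"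
proof -
  define N where "N k = int (Npairs P le rk k (i+1))" for k
  define f where "f = int (fvec P rk (i+1))"
  define X where "X = (\<Sum>k\<in>{0..i-1}. sg (k+1) * N k)"
  define s where "s = sg i"
  have S: "{-1..i+1} = insert (-1) (insert (i+1) (insert i {0..i-1}))" using i0 by auto
  have E0: "(\<Sum>k\<in>{-1..i+1}. sg (k+1) * N k) = 0" using count_up[of "i+1"] i0 by (simp add: N_def)
  have E: "sg 0 * N (-1) + (sg (i+2) * N (i+1) + (sg (i+1) * N i + X)) = 0"
    using E0 i0 unfolding S X_def by (simp add: add.assoc)
  have Nm1: "N (-1) = f" and Ni1: "N (i+1) = f" by (simp_all add: N_def f_def N_bot N_diag)
  have s2: "sg (i+2) = s" and s1: "sg (i+1) = - s" by (simp_all add: s_def sg_add sg2 sg1)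
  have E': "f + s * f - s * N i + X = 0" using E Nm1 Ni1 s2 s1 sg0 by simp
  have ss: "s * s = 1" by (simp add: s_def sg_sq)
  have "s * (f + s * f - s * N i + X) = 0" using E' by simp
  then have "s * f + (s*s) * f - (s*s) * N i + s * X = 0" by (simp add: algebra_simps)
  then have A: "N i = (s + 1) * f + s * X" using ss by (simp add: algebra_simps)
  have B: "(\<Sum>k\<in>{0..i-1}. (-1) ^ nat (i + 1 - k) * N k) = s * X"
    unfolding X_def sum_distrib_left
  proof (rule sum.cong[OF refl])
    fix k assume k: "k \<in> {0..i-1}"
    have "(-1::int) ^ nat (i + 1 - k) = sg (i+1-k)" using k by (simp add: sg_pow)
    also have "sg (i+1-k) = s * sg (k+1)"
    proof -
      have "i + 1 - k = (i - (k+1)) + 2" by simp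
      then show ?thesis by (simp only: sg_add sg_diff sg2 s_def)
    qed
    finally show "(-1) ^ nat (i + 1 - k) * N k = s * (sg (k + 1) * N k)" by simp
  qed
  show ?thesis using A B i0 by (simp add: N_def f_def s_def sg_pow)
qed

lemma N01: "Npairs P le rk 0 1 = 2 * fvec P rk 1"
  using adj[of 0] by simp

lemma dn:
  assumes i0: "0 \<le> i" and id: "i \<le> d - 3"
  shows "int (Npairs P le rk i (d-1)) = ((-1) ^ nat (d - i) + 1) * int (fvec P rk i)
           + (\<Sum>j\<in>{i+1..d-2}. (-1) ^ nat (d - j) * int (Npairs P le rk i j))"
proof -
  define N where "N k = int (Npairs P le rk i k)" for k
  define f where "f = int (fvec P rk i)"
  have S: "{i..d} = insert i (insert d (insert (d-1) {i+1..d-2}))" using id by auto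
  have E0: "(\<Sum>k\<in>{i..d}. sg (d-k) * N k) = 0" using count_down[of i] id by (simp add: N_def)
  have E: "sg (d-i) * N i + (sg 0 * N d + (sg 1 * N (d-1) + (\<Sum>k\<in>{i+1..d-2}. sg (d-k) * N k))) = 0"
    using E0 id unfolding S by (simp add: add.assoc)
  have "N i = f" "N d = f" by (simp_all add: N_def f_def N_top N_diag)
  then have A: "N (d-1) = (sg (d-i) + 1) * f + (\<Sum>k\<in>{i+1..d-2}. sg (d-k) * N k)"
    using E sg0 sg1 by (simp add: algebra_simps)
  have B: "(\<Sum>j\<in>{i+1..d-2}. (-1) ^ nat (d - j) * N j) = (\<Sum>k\<in>{i+1..d-2}. sg (d-k) * N k)"
    by (rule sum.cong[OF refl]) (simp add: sg_pow)
  show ?thesis using A B id by (simp add: N_def f_def sg_pow)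
qed

lemma Ndm: "Npairs P le rk (d-2) (d-1) = 2 * fvec P rk (d-2)"
proof -
  define N where "N k = int (Npairs P le rk (d-2) k)" for k
  define f where "f = int (fvec P rk (d-2))"
  have S: "{d-2..d} = insert (d-2) (insert d {d-1})" by auto
  have E0: "(\<Sum>k\<in>{d-2..d}. sg (d-k) * N k) = 0" using count_down[of "d-2"] by (simp add: N_def)
  have E: "sg 2 * N (d-2) + (sg 0 * N d + sg 1 * N (d-1)) = 0"
    using E0 unfolding S by simp
  have "N (d-2) = f" "N d = f" by (simp_all add: N_def f_def N_top N_diag)
  then have "N (d-1) = 2 * f" using E sg0 sg1 sg2 by simp
  then show ?thesis by (simp add: N_def f_def)
qed

lemma mpoly:
  "mobius_poly P le rk = (\<Sum>i\<in>{-1..d}. \<Sum>j\<in>{i..d}. smult (int (Npairs P le rk i j)) ([:0, -1:] ^ nat (j - i)))"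
proof -
  define A where "A = {(p, q). p \<in> P \<and> q \<in> P \<and> le p q}"
  define h where "h = (\<lambda>(p,q). monom (mobius P le p q) (nat (rk q - rk p)))"
  define T where "T = Sigma {-1..d} (\<lambda>i. {i..d})"
  define g where "g = (\<lambda>x. (rk (fst x), rk (snd x)))"
  have fA: "finite A" unfolding A_def by (rule finite_subset[of _ "P \<times> P"]) (auto simp: fin)
  have fT: "finite T" unfolding T_def by simp
  have gT: "g ` A \<subseteq> T"
  proof
    fix y assume "y \<in> g ` A"
    then obtain p q where "y = (rk p, rk q)" "p\<in>P" "q\<in>P" "le p q" unfolding A_def g_def by auto
    then show "y \<in> T" unfolding T_def using rk_ge[of p] rk_le[of p q] rk_le_d[of q] by auto
  qed
  have X: "[:0, -1:] ^ n = monom ((-1::int) ^ n) n" for n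
  proof -
    have "[:0, -1::int:] = monom (-1) (Suc 0)" by (simp add: monom_Suc monom_0)
    then show ?thesis by (simp add: monom_power)
  qed
  have "mobius_poly P le rk = sum h A" unfolding mobius_poly_def A_def h_def by simp
  also have "\<dots> = (\<Sum>y\<in>T. sum h {x\<in>A. g x = y})" by (rule sum.group[symmetric, OF fA fT gT])
  also have "\<dots> = (\<Sum>y\<in>T. case y of (i,j) \<Rightarrow> smult (int (Npairs P le rk i j)) ([:0, -1:] ^ nat (j - i)))"
  proof (rule sum.cong[OF refl])
    fix y assume "y \<in> T"
    obtain i j where y: "y = (i,j)" by (cases y)
    have e: "{x\<in>A. g x = y} = Pr i j" unfolding A_def g_def y by auto
    have "sum h (Pr i j) = (\<Sum>x\<in>Pr i j. monom ((-1::int) ^ nat (j - i)) (nat (j - i)))"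
    proof (rule sum.cong[OF refl])
      fix x assume "x \<in> Pr i j"
      then obtain p q where "x = (p,q)" "p\<in>P" "q\<in>P" "le p q" "rk p = i" "rk q = j" by auto
      then show "h x = monom ((-1::int) ^ nat (j - i)) (nat (j - i))" by (simp add: h_def mu)
    qed
    also have "\<dots> = monom (\<Sum>x\<in>Pr i j. (-1::int) ^ nat (j - i)) (nat (j - i))" by (rule monom_sum[symmetric])
    also have "\<dots> = monom (int (card (Pr i j)) * (-1::int) ^ nat (j - i)) (nat (j - i))" by simp
    also have "\<dots> = smult (int (Npairs P le rk i j)) ([:0, -1:] ^ nat (j - i))"
      by (simp add: X smult_monom Npairs_def)
    finally show "sum h {x\<in>A. g x = y} = (case y of (i,j) \<Rightarrow> smult (int (Npairs P le rk i j)) ([:0, -1:] ^ nat (j - i)))"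
      using e y by simp
  qed
  also have "\<dots> = (\<Sum>i\<in>{-1..d}. \<Sum>j\<in>{i..d}. smult (int (Npairs P le rk i j)) ([:0, -1:] ^ nat (j - i)))"
    unfolding T_def by (rule sum.Sigma[symmetric]) auto
  finally show ?thesis .
qed

end



lemma determined:
  assumes ep: "eul P le rk d" and eq: "eul Q leQ rkQ d" and d3: "d \<ge> 3"
    and ff: "\<forall>r. fvec Q rkQ r = fvec P rk r"
    and mid: "\<forall>i j. 0 < i + 1 \<and> i + 1 < j \<and> j < d - 1 \<longrightarrow> Npairs Q leQ rkQ i j = Npairs P le rk i j"
  shows "mobius_poly Q leQ rkQ = mobius_poly P le rk"
proof -
  interpret p: eul P le rk d by (rule ep)
  interpret q: eul Q leQ rkQ d by (rule eq)
  have adjeq: "Npairs Q leQ rkQ i (i+1) = Npairs P le rk i (i+1)" if i: "0 \<le> i" "i \<le> d-2" for i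
  proof (cases "i = d-2")
    case True
    then show ?thesis using p.Ndm q.Ndm ff by simp
  next
    case False
    have "(\<Sum>k\<in>{0..i-1}. (-1) ^ nat (i + 1 - k) * int (Npairs Q leQ rkQ k (i+1)))
        = (\<Sum>k\<in>{0..i-1}. (-1) ^ nat (i + 1 - k) * int (Npairs P le rk k (i+1)))"
      proof (rule sum.cong[OF refl])
        fix k assume k: "k \<in> {0..i-1}"
        have "Npairs Q leQ rkQ k (i+1) = Npairs P le rk k (i+1)"
          using mid[rule_format, of k "i+1"] k False i by simp
        then show "(-1) ^ nat (i + 1 - k) * int (Npairs Q leQ rkQ k (i+1)) = (-1) ^ nat (i + 1 - k) * int (Npairs P le rk k (i+1))" by simp
      qed
    then have "int (Npairs Q leQ rkQ i (i+1)) = int (Npairs P le rk i (i+1))"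
      using p.adj[OF i(1)] q.adj[OF i(1)] ff by simp
    then show ?thesis by simp
  qed
  have dm1: "Npairs Q leQ rkQ i (d-1) = Npairs P le rk i (d-1)" if i: "0 \<le> i" "i \<le> d-3" for i
  proof -
    have "(\<Sum>j\<in>{i+1..d-2}. (-1) ^ nat (d - j) * int (Npairs Q leQ rkQ i j))
        = (\<Sum>j\<in>{i+1..d-2}. (-1) ^ nat (d - j) * int (Npairs P le rk i j))"
    proof (rule sum.cong[OF refl])
      fix j assume j: "j \<in> {i+1..d-2}"
      show "(-1) ^ nat (d - j) * int (Npairs Q leQ rkQ i j) = (-1) ^ nat (d - j) * int (Npairs P le rk i j)"
      proof (cases "j = i+1")
        case True then show ?thesis using adjeq[of i] i by simp
      next
        case False then show ?thesis using mid[rule_format, of i j] j i by simp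
      qed
    qed
    then have "int (Npairs Q leQ rkQ i (d-1)) = int (Npairs P le rk i (d-1))"
      using p.dn[OF i] q.dn[OF i] ff by simp
    then show ?thesis by simp
  qed
  have all: "Npairs Q leQ rkQ i j = Npairs P le rk i j" if ij: "-1 \<le> i" "i \<le> j" "j \<le> d" for i j
  proof -
    consider "i = j" | "i = -1" | "j = d" | "0 \<le> i" "i < j" "j \<le> d - 1" using ij by linarith
    then show ?thesis
    proof cases
      case 1 then show ?thesis using p.N_diag q.N_diag ff by simp
    next
      case 2 then show ?thesis using p.N_bot q.N_bot ff by simp
    next
      case 3 then show ?thesis using p.N_top q.N_top ff by simp
    next
      case 4
      consider "j = i + 1" | "j = d - 1" "j \<noteq> i+1" | "i + 1 < j" "j < d - 1" using 4 by linarith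
      then show ?thesis
      proof cases
        case 1 then show ?thesis using adjeq[of i] 4 by simp
      next
        case 2 then show ?thesis using dm1[of i] 4 by simp
      next
        case 3 then show ?thesis using mid[rule_format, of i j] 4 by simp
      qed
    qed
  qed
  show ?thesis unfolding p.mpoly q.mpoly
    by (intro sum.cong refl) (simp add: all)
qed

theorem mainTheorem18:
  fixes P :: "'a set" and le :: "'a \<Rightarrow> 'a \<Rightarrow> bool" and rk :: "'a \<Rightarrow> int" and d :: int
  assumes eul: "eulerian P le rk"
    and rank_d: "d \<in> rk ` P" "\<forall>p\<in>P. rk p \<le> d"
    and d3: "d \<ge> 3"
  defines "f \<equiv> fvec P rk" and "N \<equiv> Npairs P le rk"
  shows "mobius_poly P le rk =
           (\<Sum>i\<in>{-1..d}. \<Sum>j\<in>{i..d}. smult (int (N i j)) ([:0, -1:] ^ nat (j - i)))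
    \<and> (\<forall>r\<in>{-1..d}. N r r = f r \<and> N (-1) r = f r \<and> N r d = f r)
    \<and> (N 0 1 = 2 * f 1)
    \<and> (\<forall>i\<in>{1..d-3}. int (N i (i+1)) =
           ((-1) ^ nat i + 1) * int (f (i+1))
           + (\<Sum>k\<in>{0..i-1}. (-1) ^ nat (i + 1 - k) * int (N k (i+1))))
    \<and> (N (d-2) (d-1) = 2 * f (d-2))
    \<and> (\<forall>i\<in>{0..d-3}. int (N i (d-1)) =
           ((-1) ^ nat (d - i) + 1) * int (f i)
           + (\<Sum>j\<in>{i+1..d-2}. (-1) ^ nat (d - j) * int (N i j)))
    \<and> (\<forall>(Q :: 'b set) leQ rkQ. eulerian Q leQ rkQ \<and> d \<in> rkQ ` Q \<and> (\<forall>q\<in>Q. rkQ q \<le> d)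
           \<and> (\<forall>r. fvec Q rkQ r = f r)
           \<and> (\<forall>i j. 0 < i + 1 \<and> i + 1 < j \<and> j < d - 1 \<longrightarrow> Npairs Q leQ rkQ i j = N i j)
           \<longrightarrow> mobius_poly Q leQ rkQ = mobius_poly P le rk)"
proof -
  have ep: "eul P le rk d" using eul rank_d by (simp add: eul_def)
  interpret p: eul P le rk d by (rule ep)
  show ?thesis unfolding f_def N_def
  proof (intro conjI ballI allI impI)
    show "mobius_poly P le rk = (\<Sum>i\<in>{-1..d}. \<Sum>j\<in>{i..d}. smult (int (Npairs P le rk i j)) ([:0, -1:] ^ nat (j - i)))"
      by (rule p.mpoly)
  next
    fix r show "Npairs P le rk r r = fvec P rk r" by (rule p.N_diag)
  next
    fix r show "Npairs P le rk (-1) r = fvec P rk r" by (rule p.N_bot)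
  next
    fix r show "Npairs P le rk r d = fvec P rk r" by (rule p.N_top)
  next
    show "Npairs P le rk 0 1 = 2 * fvec P rk 1" by (rule p.N01)
  next
    fix i :: int assume "i \<in> {1..d-3}"
    then show "int (Npairs P le rk i (i+1)) = ((-1) ^ nat i + 1) * int (fvec P rk (i+1))
           + (\<Sum>k\<in>{0..i-1}. (-1) ^ nat (i + 1 - k) * int (Npairs P le rk k (i+1)))"
      by (intro p.adj) simp
  next
    show "Npairs P le rk (d-2) (d-1) = 2 * fvec P rk (d-2)" by (rule p.Ndm)
  next
    fix i :: int assume "i \<in> {0..d-3}"
    then show "int (Npairs P le rk i (d-1)) = ((-1) ^ nat (d - i) + 1) * int (fvec P rk i)
           + (\<Sum>j\<in>{i+1..d-2}. (-1) ^ nat (d - j) * int (Npairs P le rk i j))"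
      by (intro p.dn) simp_all
  next
    fix Q :: "'b set" and leQ rkQ
    assume h: "eulerian Q leQ rkQ \<and> d \<in> rkQ ` Q \<and> (\<forall>q\<in>Q. rkQ q \<le> d)
           \<and> (\<forall>r. fvec Q rkQ r = fvec P rk r)
           \<and> (\<forall>i j. 0 < i + 1 \<and> i + 1 < j \<and> j < d - 1 \<longrightarrow> Npairs Q leQ rkQ i j = Npairs P le rk i j)"
    have eq: "eul Q leQ rkQ d" using h by (simp add: eul_def)
    show "mobius_poly Q leQ rkQ = mobius_poly P le rk"
      by (rule determined[OF ep eq d3]) (use h in auto)
  qed
qed


end
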